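(* Let $\mathcal{X}\subset\mathbb{R}^d$ be nonempty, closed, convex and compact with diameter $D:=\max_{x,y\in\mathcal{X}}\|x-y\|$. Let $\Phi:\mathcal{X}\to\mathbb{R}$ be differentiable with $L$-Lipschitz gradient, and set $G:=\max_{x\in\mathcal{X}}\|\nabla\Phi(x)\|$, $\Phi_{\max}:=\max_{\mathcal{X}}\Phi$, $\Phi_{\min}:=\min_{\mathcal{X}}\Phi$. Let $F:\mathcal{X}\to\mathbb{R}^d$ satisfy $F(x)=-\nabla\Phi(x)+R(x)$ with $\|R(x)\|\le\varepsilon$ for all $x\in\mathcal{X}$. Run $x_{t+1}=\operatorname{Proj}_{\mathcal{X}}(x_t+\eta g_t)$, $t=0,\dots,T-1$, from $x_0\in\mathcal{X}$ with $0<\eta\le 1/L$, where the directions $g_t\in\mathbb{R}^d$ satisfy $\|g_t-\nabla\Phi(x_t)\|\le\delta_t\le\bar\delta$ for all $t$. Let $\widetilde{\mathcal{G}}_\eta(x_t):=\frac1\eta(x_{t+1}-x_t)$, pick $\hat t\in\arg\min_{0\le t\le T-1}\|\widetilde{\mathcal{G}}_\eta(x_t)\|$ and set $\hat x_T:=x_{\hat t}$. Then $$\operatorname{Gap}(\hat x_T)\le \bigl(D+\eta(G+\bar\delta)\bigr)\sqrt{\frac{4(\Phi_{\max}-\Phi_{\min})}{T\eta}+4\bar\delta^2}+D(\varepsilon+\bar\delta).$$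
   Context: For $\bar x\in\mathcal{X}$, the duality gap of $F$ is $\operatorname{Gap}(\bar x):=\max_{x\in\mathcal{X}}\langle F(\bar x),\bar x-x\rangle$ with the Euclidean inner product. $\operatorname{Proj}_{\mathcal{X}}$ is Euclidean projection onto $\mathcal{X}$. *)

theory Defs
  imports "HOL-Analysis.Analysis"
begin

definition gap :: "'a::euclidean_space set \<Rightarrow> ('a \<Rightarrow> 'a) \<Rightarrow> 'a \<Rightarrow> real" where
  "gap X F xb = (SUP x\<in>X. F xb \<bullet> (xb - x))"

end

theory Submission
  imports Defs
begin

lemma descent:
  fixes X :: "'a::euclidean_space set" and Phi :: "'a \<Rightarrow> real" and gp :: "'a \<Rightarrow> 'a"
  assumes cx: "convex X" and a: "a \<in> X" and b: "b \<in> X"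
    and der: "\<And>y. y \<in> X \<Longrightarrow> (Phi has_derivative (\<lambda>h. gp y \<bullet> h)) (at y within X)"
    and lip: "\<And>y z. y \<in> X \<Longrightarrow> z \<in> X \<Longrightarrow> norm (gp y - gp z) \<le> L * norm (y - z)"
  shows "Phi b \<ge> Phi a + gp a \<bullet> (b - a) - L / 2 * (norm (b - a))\<^sup>2"
proof -
  define p where "p s = a + s *\<^sub>R (b - a)" for s :: real
  have pX: "p s \<in> X" if "s \<in> {0..1}" for s
  proof -
    have "p s = (1 - s) *\<^sub>R a + s *\<^sub>R b" unfolding p_def by (simp add: algebra_simps)
    thus ?thesis using that cx a b by (auto intro: convexD_alt)
  qed
  define h where "h s = Phi (p s) - s * (gp a \<bullet> (b - a)) + L / 2 * s\<^sup>2 * (norm (b - a))\<^sup>2" for s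
  define h' where "h' s = (\<lambda>u. u * (gp (p s) \<bullet> (b - a)) - u * (gp a \<bullet> (b - a)) + L * s * u * (norm (b - a))\<^sup>2)" for s :: real
  have hd: "(h has_derivative h' s) (at s within {0..1})" if s: "0 \<le> s" "s \<le> 1" for s
  proof -
    have pd: "(p has_derivative (\<lambda>u. u *\<^sub>R (b - a))) (at s within {0..1})"
      unfolding p_def by (auto intro!: derivative_eq_intros)
    have "(Phi has_derivative (\<lambda>h. gp (p s) \<bullet> h)) (at (p s) within p ` {0..1})"
      by (rule has_derivative_subset[OF der]) (use pX s in auto)
    from diff_chain_within[OF pd this]
    have c: "((\<lambda>s. Phi (p s)) has_derivative (\<lambda>u. u * (gp (p s) \<bullet> (b - a)))) (at s within {0..1})"
      by (simp add: o_def)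
    show ?thesis unfolding h_def h'_def
      by (rule c derivative_eq_intros refl | simp)+ (simp add: algebra_simps)
  qed
  obtain s where s: "s \<in> {0..1}" and eq: "h 1 - h 0 = h' s (1 - 0)"
    using mvt_very_simple[of 0 1 h h'] hd by auto
  have "norm (gp (p s) - gp a) \<le> L * norm (p s - a)" using lip pX s a by blast
  also have "norm (p s - a) = s * norm (b - a)" unfolding p_def using s by simp
  finally have n: "norm (gp (p s) - gp a) \<le> L * (s * norm (b - a))" .
  have "- ((gp (p s) - gp a) \<bullet> (b - a)) \<le> norm (gp (p s) - gp a) * norm (b - a)"
    by (metis Cauchy_Schwarz_ineq2 abs_le_D2)
  also have "\<dots> \<le> L * (s * norm (b - a)) * norm (b - a)"
    by (rule mult_right_mono[OF n]) simp
  finally have "0 \<le> h' s 1" unfolding h'_def by (simp add: inner_diff_left power2_eq_square algebra_simps)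
  hence "h 0 \<le> h 1" using eq by simp
  thus ?thesis unfolding h_def p_def by simp
qed

theorem theorem6p8:
  fixes X :: "'a::euclidean_space set"
    and Phi :: "'a \<Rightarrow> real" and gradPhi :: "'a \<Rightarrow> 'a"
    and F R :: "'a \<Rightarrow> 'a"
    and x g :: "nat \<Rightarrow> 'a" and delta :: "nat \<Rightarrow> real"
    and L eta eps deltabar :: real and T th :: nat
  assumes X_ne: "X \<noteq> {}" and X_closed: "closed X" and X_convex: "convex X"
    and X_compact: "compact X"
    and Phi_diff: "\<And>y. y \<in> X \<Longrightarrow> (Phi has_derivative (\<lambda>h. gradPhi y \<bullet> h)) (at y within X)"
    and grad_lip: "\<And>y z. y \<in> X \<Longrightarrow> z \<in> X \<Longrightarrow> norm (gradPhi y - gradPhi z) \<le> L * norm (y - z)"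
    and F_def: "\<And>y. y \<in> X \<Longrightarrow> F y = - gradPhi y + R y"
    and R_bound: "\<And>y. y \<in> X \<Longrightarrow> norm (R y) \<le> eps"
    and x0: "x 0 \<in> X"
    and step: "\<And>t. t < T \<Longrightarrow> x (Suc t) = closest_point X (x t + eta *\<^sub>R g t)"
    and eta_pos: "0 < eta" and eta_le: "eta \<le> 1 / L"
    and g_err: "\<And>t. t < T \<Longrightarrow> norm (g t - gradPhi (x t)) \<le> delta t"
    and delta_le: "\<And>t. t < T \<Longrightarrow> delta t \<le> deltabar"
    and th_lt: "th < T"
    and th_min: "\<And>t. t < T \<Longrightarrow>
        norm ((1 / eta) *\<^sub>R (x (Suc th) - x th)) \<le> norm ((1 / eta) *\<^sub>R (x (Suc t) - x t))"
  shows "gap X F (x th) \<le>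
    (diameter X + eta * ((SUP y\<in>X. norm (gradPhi y)) + deltabar)) *
      sqrt (4 * ((SUP y\<in>X. Phi y) - (INF y\<in>X. Phi y)) / (real T * eta) + 4 * deltabar\<^sup>2)
    + diameter X * (eps + deltabar)"
proof -
  have Lpos: "L > 0"
  proof (rule ccontr)
    assume "\<not> L > 0"
    hence "1 / L \<le> 0" by simp
    thus False using eta_pos eta_le by linarith
  qed
  have xX: "t \<le> T \<Longrightarrow> x t \<in> X" for t
  proof (induction t)
    case 0 thus ?case using x0 by simp
  next
    case (Suc t) thus ?case using step[of t] closest_point_in_set[OF X_closed X_ne] by simp
  qed
  have bX: "bounded X" using X_compact compact_imp_bounded by blast
  define D where "D = diameter X"
  have dX: "norm (a - b) \<le> D" if "a \<in> X" "b \<in> X" for a b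
    using diameter_bounded_bound[OF bX that] unfolding D_def by (simp add: dist_norm)
  have D0: "0 \<le> D" using dX[OF x0 x0] by simp
  define Gs where "Gs = (SUP y\<in>X. norm (gradPhi y))"
  have gbdd: "bdd_above ((\<lambda>y. norm (gradPhi y)) ` X)"
  proof (rule bdd_aboveI2)
    fix y assume y: "y \<in> X"
    have "norm (gradPhi y) \<le> norm (gradPhi (x 0)) + norm (gradPhi y - gradPhi (x 0))"
      by (metis add.commute diff_add_cancel norm_triangle_ineq)
    also have "\<dots> \<le> norm (gradPhi (x 0)) + L * D"
      using grad_lip[OF y x0] dX[OF y x0] Lpos
      by (smt (verit) mult_left_mono)
    finally show "norm (gradPhi y) \<le> norm (gradPhi (x 0)) + L * D" .
  qed
  have gGs: "y \<in> X \<Longrightarrow> norm (gradPhi y) \<le> Gs" for y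
    unfolding Gs_def by (rule cSUP_upper[OF _ gbdd])
  have contPhi: "continuous_on X Phi"
    unfolding continuous_on_eq_continuous_within
    using Phi_diff has_derivative_continuous by blast
  have bPhi: "bounded (Phi ` X)"
    using compact_continuous_image[OF contPhi X_compact] compact_imp_bounded by blast
  define Smax where "Smax = (SUP y\<in>X. Phi y)"
  define Smin where "Smin = (INF y\<in>X. Phi y)"
  have PhiMax: "y \<in> X \<Longrightarrow> Phi y \<le> Smax" for y
    unfolding Smax_def by (rule cSUP_upper[OF _ bounded_imp_bdd_above[OF bPhi]])
  have PhiMin: "y \<in> X \<Longrightarrow> Smin \<le> Phi y" for y
    unfolding Smin_def by (rule cINF_lower[OF bounded_imp_bdd_below[OF bPhi]])
  define n where "n t = norm ((1 / eta) *\<^sub>R (x (Suc t) - x t))" for t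
  have nd: "norm (x (Suc t) - x t) = eta * n t" for t
    unfolding n_def using eta_pos by simp
  have n0: "0 \<le> n t" for t unfolding n_def by simp
  have proj: "(x t + eta *\<^sub>R g t - x (Suc t)) \<bullet> (z - x (Suc t)) \<le> 0" if "t < T" "z \<in> X" for t z
    using closest_point_dot[OF X_convex X_closed that(2), of "x t + eta *\<^sub>R g t"] step[OF that(1)]
    by simp
  have del0: "0 \<le> delta t" if "t < T" for t using g_err[OF that] norm_ge_zero order_trans by blast
  have db0: "0 \<le> deltabar" using del0[OF th_lt] delta_le[OF th_lt] by linarith
  have asc: "Phi (x (Suc t)) - Phi (x t) \<ge> eta / 4 * (n t)\<^sup>2 - eta * deltabar\<^sup>2" if t: "t < T" for t
  proof -
    define d where "d = x (Suc t) - x t"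
    define m where "m = norm d"
    have m: "m = eta * n t" unfolding m_def d_def by (rule nd)
    have xt: "x t \<in> X" and xs: "x (Suc t) \<in> X" using xX t by auto
    have "(x t + eta *\<^sub>R g t - x (Suc t)) \<bullet> (x t - x (Suc t)) \<le> 0" by (rule proj[OF t xt])
    hence "(eta *\<^sub>R g t - d) \<bullet> d \<ge> 0" unfolding d_def
      by (simp add: algebra_simps inner_diff_left inner_diff_right inner_commute)
    hence g1: "eta * (g t \<bullet> d) \<ge> m\<^sup>2" unfolding m_def
      by (simp add: inner_diff_left power2_norm_eq_inner)
    have "\<bar>(gradPhi (x t) - g t) \<bullet> d\<bar> \<le> norm (gradPhi (x t) - g t) * m"
      unfolding m_def by (rule Cauchy_Schwarz_ineq2)
    also have "\<dots> \<le> delta t * m"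
      using g_err[OF t] by (metis m_def mult_right_mono norm_ge_zero norm_minus_commute)
    also have "\<dots> \<le> deltabar * m" using delta_le[OF t] m_def by (simp add: mult_right_mono)
    finally have e1: "gradPhi (x t) \<bullet> d \<ge> g t \<bullet> d - deltabar * m"
      by (simp add: inner_diff_left)
    have des: "Phi (x (Suc t)) \<ge> Phi (x t) + gradPhi (x t) \<bullet> d - L / 2 * m\<^sup>2"
      unfolding d_def m_def by (rule descent[OF X_convex xt xs Phi_diff grad_lip])
    have Le: "L * eta \<le> 1" using eta_le Lpos by (simp add: field_simps)
    have "Phi (x (Suc t)) - Phi (x t) \<ge> g t \<bullet> d - deltabar * m - L / 2 * m\<^sup>2"
      using des e1 by linarith
    hence "eta * (g t \<bullet> d - deltabar * m - L / 2 * m\<^sup>2) \<le> eta * (Phi (x (Suc t)) - Phi (x t))"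
      using eta_pos by (intro mult_left_mono) auto
    hence A: "eta * (Phi (x (Suc t)) - Phi (x t)) \<ge> eta * (g t \<bullet> d) - eta * deltabar * m - L * eta / 2 * m\<^sup>2"
      by (simp add: right_diff_distrib mult.assoc mult.left_commute)
    have "L * eta * m\<^sup>2 \<le> 1 * m\<^sup>2" by (rule mult_right_mono[OF Le]) simp
    hence B: "L * eta / 2 * m\<^sup>2 \<le> m\<^sup>2 / 2" by simp
    have "(m / 2 - eta * deltabar)\<^sup>2 = m\<^sup>2 / 4 - eta * deltabar * m + eta\<^sup>2 * deltabar\<^sup>2"
      by (simp add: power2_diff power_mult_distrib field_simps)
    hence C: "0 \<le> m\<^sup>2 / 4 - eta * deltabar * m + eta\<^sup>2 * deltabar\<^sup>2"
      by (metis zero_le_power2)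
    have "eta * (Phi (x (Suc t)) - Phi (x t)) \<ge> m\<^sup>2 / 4 - eta\<^sup>2 * deltabar\<^sup>2"
      using A B C g1 by linarith
    moreover have "m\<^sup>2 / 4 - eta\<^sup>2 * deltabar\<^sup>2 = eta * (eta / 4 * (n t)\<^sup>2 - eta * deltabar\<^sup>2)"
      unfolding m by (simp add: power_mult_distrib power2_eq_square algebra_simps)
    ultimately have "eta * (Phi (x (Suc t)) - Phi (x t)) \<ge> eta * (eta / 4 * (n t)\<^sup>2 - eta * deltabar\<^sup>2)"
      by simp
    thus ?thesis using eta_pos by simp
  qed
  have T0: "0 < T" using th_lt by simp
  have "(\<Sum>t<T. eta / 4 * (n th)\<^sup>2 - eta * deltabar\<^sup>2) \<le> (\<Sum>t<T. Phi (x (Suc t)) - Phi (x t))"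
  proof (rule sum_mono)
    fix t assume "t \<in> {..<T}"
    hence t: "t < T" by simp
    have "(n th)\<^sup>2 \<le> (n t)\<^sup>2" using th_min[OF t] n0 unfolding n_def[symmetric] by (simp add: power_mono)
    hence "eta / 4 * (n th)\<^sup>2 \<le> eta / 4 * (n t)\<^sup>2" using eta_pos by simp
    thus "eta / 4 * (n th)\<^sup>2 - eta * deltabar\<^sup>2 \<le> Phi (x (Suc t)) - Phi (x t)" using asc[OF t] by linarith
  qed
  also have "\<dots> = Phi (x T) - Phi (x 0)" by (rule sum_lessThan_telescope)
  also have "\<dots> \<le> Smax - Smin" using PhiMax[OF xX[of T]] PhiMin[OF x0] by simp
  finally have "real T * (eta / 4 * (n th)\<^sup>2 - eta * deltabar\<^sup>2) \<le> Smax - Smin" by simp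
  hence "(real T * eta) * (n th)\<^sup>2 \<le> 4 * (Smax - Smin) + (real T * eta) * (4 * deltabar\<^sup>2)"
    by (simp add: algebra_simps)
  hence "(n th)\<^sup>2 \<le> (4 * (Smax - Smin) + (real T * eta) * (4 * deltabar\<^sup>2)) / (real T * eta)"
    using T0 eta_pos by (simp add: field_simps)
  also have "\<dots> = 4 * (Smax - Smin) / (real T * eta) + 4 * deltabar\<^sup>2"
    using T0 eta_pos by (simp add: field_simps)
  finally have nS: "n th \<le> sqrt (4 * (Smax - Smin) / (real T * eta) + 4 * deltabar\<^sup>2)"
    using n0 real_le_rsqrt by blast
  define S where "S = sqrt (4 * (Smax - Smin) / (real T * eta) + 4 * deltabar\<^sup>2)"
  have S0: "0 \<le> S" unfolding S_def using nS n0 order_trans by blast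
  have Gs0: "0 \<le> Gs" using gGs[OF x0] norm_ge_zero order_trans by blast
  have xh: "x th \<in> X" and xh': "x (Suc th) \<in> X" using xX th_lt by auto
  have main: "F (x th) \<bullet> (x th - z) \<le> (D + eta * (Gs + deltabar)) * S + D * (eps + deltabar)"
    if z: "z \<in> X" for z
  proof -
    have Fe: "F (x th) \<bullet> (x th - z) = gradPhi (x th) \<bullet> (z - x (Suc th)) + gradPhi (x th) \<bullet> (x (Suc th) - x th) + R (x th) \<bullet> (x th - z)"
      unfolding F_def[OF xh] by (simp add: inner_diff_left inner_diff_right inner_add_left algebra_simps)
    have r1: "R (x th) \<bullet> (x th - z) \<le> eps * D"
    proof -
      have "R (x th) \<bullet> (x th - z) \<le> norm (R (x th)) * norm (x th - z)" by (rule norm_cauchy_schwarz)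
      also have "\<dots> \<le> eps * D" using R_bound[OF xh] dX[OF xh z] by (simp add: mult_mono')
      finally show ?thesis .
    qed
    have r2: "gradPhi (x th) \<bullet> (x (Suc th) - x th) \<le> Gs * (eta * n th)"
    proof -
      have "gradPhi (x th) \<bullet> (x (Suc th) - x th) \<le> norm (gradPhi (x th)) * norm (x (Suc th) - x th)" by (rule norm_cauchy_schwarz)
      also have "\<dots> = norm (gradPhi (x th)) * (eta * n th)" using nd[of th] by simp
      also have "\<dots> \<le> Gs * (eta * n th)"
        by (rule mult_right_mono[OF gGs[OF xh]]) (use eta_pos n0[of th] in simp)
      finally show ?thesis .
    qed
    have "(x th + eta *\<^sub>R g th - x (Suc th)) \<bullet> (z - x (Suc th)) \<le> 0" by (rule proj[OF th_lt z])
    hence "eta * (g th \<bullet> (z - x (Suc th))) \<le> (x (Suc th) - x th) \<bullet> (z - x (Suc th))"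
      by (simp add: algebra_simps inner_diff_left inner_diff_right inner_commute)
    also have "\<dots> \<le> norm (x (Suc th) - x th) * norm (z - x (Suc th))" by (rule norm_cauchy_schwarz)
    also have "\<dots> \<le> (eta * n th) * D" using nd[of th] dX[OF z xh'] eta_pos n0 by (simp add: mult_left_mono)
    finally have "eta * (g th \<bullet> (z - x (Suc th))) \<le> eta * (n th * D)" by simp
    hence r3: "g th \<bullet> (z - x (Suc th)) \<le> n th * D" using eta_pos by simp
    have "(gradPhi (x th) - g th) \<bullet> (z - x (Suc th)) \<le> norm (gradPhi (x th) - g th) * norm (z - x (Suc th))"
      by (rule norm_cauchy_schwarz)
    also have "\<dots> \<le> deltabar * D"
      using g_err[OF th_lt] delta_le[OF th_lt] dX[OF z xh'] db0
      by (metis (no_types, opaque_lifting) mult_mono' norm_ge_zero norm_minus_commute order_trans)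
    finally have r4: "gradPhi (x th) \<bullet> (z - x (Suc th)) \<le> n th * D + deltabar * D"
      using r3 by (simp add: inner_diff_left)
    have "F (x th) \<bullet> (x th - z) \<le> n th * (D + eta * Gs) + deltabar * D + eps * D"
      using Fe r1 r2 r4 by (simp add: algebra_simps)
    also have "\<dots> \<le> S * (D + eta * Gs) + deltabar * D + eps * D"
      using nS D0 Gs0 eta_pos unfolding S_def by (simp add: mult_right_mono)
    also have "\<dots> \<le> (D + eta * (Gs + deltabar)) * S + D * (eps + deltabar)"
      using S0 eta_pos db0 by (simp add: algebra_simps)
    finally show ?thesis .
  qed
  have "gap X F (x th) \<le> (D + eta * (Gs + deltabar)) * S + D * (eps + deltabar)"
    unfolding gap_def by (rule cSUP_least[OF X_ne main])
  thus ?thesis unfolding D_def Gs_def S_def Smax_def Smin_def .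
qed

end
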